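(* Fix integers $m\ge d\ge1$, $\lambda=d/m$, let $p$ be a monic polynomial of degree $d$ with nonnegative real roots, and let $\sigma^2>0$. The following are equivalent: (1) $T^{(m,d)}_{\mathbb{S}p}$ is constant equal to $\sigma^2$, i.e. $t_1=\dots=t_d=\sigma^2$; (2) $\mathcal R^{d,\lambda}_{\mathbb{S}p}(s)=m\sigma^2s$; (3) $p$ has the same roots as $L_d^{(m-d)}(x/\sigma^2)$.
   Context: Write $p=\sum_{i=0}^d(-1)^ip_ix^{d-i}$. The rectangular $T$-transform $T^{(m,d)}_{\mathbb{S}p}$ is the multiset of complex numbers $t_1,\dots,t_d$ (viewed as a uniformly distributed random variable) determined by $\frac1d\sum_jt_j^i=\frac{i!(m-i)!(d-i)!}{m!d!}p_i$ for $i=1,\dots,d$; equivalently $\frac1d\sum_je^{-t_j\partial_x\partial_y}\{y^mx^d\}=y^{m-d}p(xy)$. Finite $R$-transform: with $E_p(s)=\sum_{i=0}^d(-1)^i(md)^i\frac{(m-i)!(d-i)!}{m!d!}p_is^i$, $\mathcal R^{d,\lambda}_{\mathbb{S}p}(s)$ is the polynomial of degree $\le d$ agreeing with $-\frac sd\frac d{ds}\log E_p(s)$ mod $s^{d+1}$. $L_d^{(\alpha)}(x)=\sum_{i=0}^d\binom{d+\alpha}{d-i}\frac{(-x)^i}{i!}$. *)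

theory Defs
  imports "HOL-Computational_Algebra.Computational_Algebra" "HOL-Library.Multiset"
begin

definition pcoef :: "nat \<Rightarrow> real poly \<Rightarrow> nat \<Rightarrow> real" where
  "pcoef d p i = (-1) ^ i * coeff p (d - i)"

definition T_transform :: "nat \<Rightarrow> nat \<Rightarrow> real poly \<Rightarrow> complex multiset" where
  "T_transform m d p = (THE T. size T = d \<and>
     (\<forall>i\<in>{1..d}. (1 / of_nat d) * sum_mset (image_mset (\<lambda>t. t ^ i) T) =
        complex_of_real (fact i * fact (m - i) * fact (d - i) / (fact m * fact d) * pcoef d p i)))"

definition E_fps :: "nat \<Rightarrow> nat \<Rightarrow> real poly \<Rightarrow> real fps" where
  "E_fps m d p = Abs_fps (\<lambda>i. if i \<le> d then
      (-1) ^ i * (real m * real d) ^ i * (fact (m - i) * fact (d - i) / (fact m * fact d)) * pcoef d p i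
    else 0)"

definition R_transform :: "nat \<Rightarrow> nat \<Rightarrow> real poly \<Rightarrow> real poly" where
  "R_transform m d p =
     (let F = - (fps_const (1 / real d) * fps_X * fps_deriv (E_fps m d p) * inverse (E_fps m d p))
      in Poly (map (fps_nth F) [0..<Suc d]))"

definition laguerre :: "nat \<Rightarrow> nat \<Rightarrow> real poly" where
  "laguerre d \<alpha> = (\<Sum>i\<le>d. smult (real ((d + \<alpha>) choose (d - i)) * (-1) ^ i / fact i) (monom 1 i))"

end

theory Submission
  imports Defs
begin

definition FA :: "complex multiset \<Rightarrow> complex fps" where
  "FA A = (\<Prod>a\<in>#A. 1 - fps_const a * fps_X)"
definition PSf :: "complex multiset \<Rightarrow> complex fps" where
  "PSf A = Abs_fps (\<lambda>k. if k = 0 then 0 else (\<Sum>a\<in>#A. a ^ k))"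
definition gA :: "complex multiset \<Rightarrow> complex poly" where
  "gA A = (\<Prod>a\<in>#A. [:-a, 1:])"
definition S1 :: "complex \<Rightarrow> complex fps" where
  "S1 a = Abs_fps (\<lambda>k. if k = 0 then 0 else a ^ k)"

lemma S1_prop: "(1 - fps_const a * fps_X) * S1 a = fps_const a * fps_X"
proof -
  have "(1 - fps_const a * fps_X) * S1 a = S1 a - fps_const a * (fps_X * S1 a)"
    by (simp add: algebra_simps)
  also have "\<dots> = fps_const a * fps_X"
    by (rule fps_ext) (auto simp: S1_def fps_X_mult_nth power_eq_if)
  finally show ?thesis .
qed

lemma fconst_neg_mult: "fps_const (-a) * x = - (fps_const a * (x::complex fps))"
  by (simp del: fps_const_neg add: fps_const_neg[symmetric])

lemma PSf_add: "PSf (add_mset a A) = S1 a + PSf A"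
  by (rule fps_ext) (simp add: PSf_def S1_def)

lemma FA_add: "FA (add_mset a A) = (1 - fps_const a * fps_X) * FA A"
  by (simp add: FA_def)

lemma FA_ident: "fps_X * fps_deriv (FA A) = - FA A * PSf A"
proof (induction A)
  case empty
  have "PSf {#} = 0" by (rule fps_ext) (simp add: PSf_def)
  then show ?case by (simp add: FA_def)
next
  case (add a A)
  have "fps_X * fps_deriv (FA (add_mset a A)) =
     - fps_const a * fps_X * FA A + (1 - fps_const a * fps_X) * (fps_X * fps_deriv (FA A))"
    by (simp add: FA_add algebra_simps del: fps_const_neg)
  also have "\<dots> = - ((1 - fps_const a * fps_X) * S1 a) * FA A - (1 - fps_const a * fps_X) * (FA A * PSf A)"
    by (simp add: add S1_prop fconst_neg_mult)
  also have "\<dots> = - FA (add_mset a A) * PSf (add_mset a A)"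
    by (simp add: FA_add PSf_add algebra_simps)
  finally show ?case .
qed

lemma FA_0: "FA A $ 0 = 1"
  by (induction A) (simp_all add: FA_add, simp add: FA_def)

definition Nrel :: "(nat \<Rightarrow> complex) \<Rightarrow> (nat \<Rightarrow> complex) \<Rightarrow> nat \<Rightarrow> bool" where
  "Nrel s F n \<longleftrightarrow> of_nat n * F n = - (\<Sum>i<n. F i * s (n - i))"

lemma Nrel_FA: "Nrel (\<lambda>k. PSf A $ k) (\<lambda>k. FA A $ k) n"
proof -
  have "(fps_X * fps_deriv (FA A)) $ n = (- FA A * PSf A) $ n" by (simp only: FA_ident)
  moreover have "(fps_X * fps_deriv (FA A)) $ n = of_nat n * FA A $ n"
    by (cases n) simp_all
  moreover have "(FA A * PSf A) $ n = (\<Sum>i<n. FA A $ i * PSf A $ (n - i))"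
    unfolding fps_mult_nth atLeast0AtMost lessThan_Suc_atMost[symmetric]
    by (simp add: PSf_def)
  ultimately show ?thesis unfolding Nrel_def by simp
qed

lemma Nrel_cong:
  assumes "\<And>k. 1 \<le> k \<Longrightarrow> k \<le> n \<Longrightarrow> s k = t k" "\<And>i. i \<le> n \<Longrightarrow> F i = G i"
  shows "Nrel s F n = Nrel t G n"
proof -
  have "(\<Sum>i<n. F i * s (n - i)) = (\<Sum>i<n. G i * t (n - i))"
    by (rule sum.cong) (auto simp: assms)
  then show ?thesis unfolding Nrel_def using assms(2)[of n] by simp
qed

lemma Nrel_uniqF:
  assumes "F 0 = G 0" "\<And>n. 1 \<le> n \<Longrightarrow> n \<le> d \<Longrightarrow> Nrel s F n \<and> Nrel s G n"
  shows "n \<le> d \<Longrightarrow> F n = G n"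
proof (induction n rule: less_induct)
  case (less n)
  show ?case
  proof (cases "n = 0")
    case True then show ?thesis using assms(1) by simp
  next
    case False
    have "(\<Sum>i<n. F i * s (n - i)) = (\<Sum>i<n. G i * s (n - i))"
      by (rule sum.cong) (use less in auto)
    moreover have "Nrel s F n" "Nrel s G n" using assms(2)[of n] False less.prems by auto
    ultimately have "of_nat n * F n = of_nat n * G n" unfolding Nrel_def by simp
    then show ?thesis using False by simp
  qed
qed

lemma Nrel_uniqS:
  assumes "F 0 = 1" "\<And>n. 1 \<le> n \<Longrightarrow> n \<le> d \<Longrightarrow> Nrel s F n \<and> Nrel t F n"
  shows "1 \<le> n \<Longrightarrow> n \<le> d \<Longrightarrow> s n = t n"
proof (induction n rule: less_induct)
  case (less n)
  have split: "{..<n} = insert 0 {1..<n}" using less.prems by auto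
  have "(\<Sum>i\<in>{1..<n}. F i * s (n - i)) = (\<Sum>i\<in>{1..<n}. F i * t (n - i))"
    by (rule sum.cong) (use less in auto)
  moreover have "Nrel s F n" "Nrel t F n" using assms(2)[of n] less.prems by auto
  ultimately show ?case unfolding Nrel_def split using assms(1) by simp
qed

lemma gA_add: "gA (add_mset a A) = [:-a, 1:] * gA A"
  by (simp add: gA_def)

lemma gA_nz: "gA A \<noteq> 0"
proof (induction A)
  case empty then show ?case by (simp add: gA_def)
next
  case (add a A)
  have "[:-a, 1:] * gA A \<noteq> 0" using add.IH by (simp del: mult_pCons_left)
  then show ?case unfolding gA_add .
qed

lemma degree_gA: "degree (gA A) = size A"
proof (induction A)
  case empty then show ?case by (simp add: gA_def)
next
  case (add a A)
  have "degree ([:-a, 1:] * gA A) = Suc (size A)" using add.IH gA_nz[of A]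
    by (subst degree_mult_eq) (simp_all del: mult_pCons_left)
  then show ?case by (simp only: gA_add size_add_mset)
qed

lemma proots_gA: "proots (gA A) = A"
proof (induction A)
  case empty then show ?case by (simp add: gA_def)
next
  case (add a A)
  have "proots ([:-a, 1:] * gA A) = add_mset a A" using add.IH gA_nz[of A]
    by (subst proots_mult) (simp_all del: mult_pCons_left)
  then show ?case by (simp only: gA_add)
qed

lemma FA_nth_add: "FA (add_mset a A) $ k = FA A $ k - a * (if k = 0 then 0 else FA A $ (k - 1))"
proof -
  have "FA (add_mset a A) = FA A - fps_const a * (fps_X * FA A)"
    by (simp add: FA_add algebra_simps)
  then show ?thesis by simp
qed

lemma coeff_gA_add: "coeff (gA (add_mset a A)) j = (if j = 0 then 0 else coeff (gA A) (j - 1)) - a * coeff (gA A) j"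
proof -
  have "gA (add_mset a A) = pCons 0 (gA A) - smult a (gA A)"
    by (simp add: gA_add algebra_simps)
  then show ?thesis by (simp add: coeff_pCons split: nat.split)
qed

lemma gA_FA: "(\<forall>k\<le>size A. coeff (gA A) (size A - k) = FA A $ k) \<and> (\<forall>k>size A. FA A $ k = 0)"
proof (induction A)
  case empty
  then show ?case by (simp add: gA_def FA_def)
next
  case (add a A)
  define n where "n = size A"
  have IH1: "\<And>k. k \<le> n \<Longrightarrow> coeff (gA A) (n - k) = FA A $ k" and IH2: "\<And>k. k > n \<Longrightarrow> FA A $ k = 0"
    using add n_def by auto
  have dg: "coeff (gA A) j = 0" if "j > n" for j
    using that degree_gA[of A] n_def by (simp add: coeff_eq_0)
  have A1: "coeff (gA (add_mset a A)) (Suc n - k) = FA (add_mset a A) $ k" if "k \<le> Suc n" for k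
  proof -
    consider "k = 0" | "k = Suc n" | "0 < k" "k < Suc n" using \<open>k \<le> Suc n\<close> by linarith
    then show ?thesis
    proof cases
      case 1 then show ?thesis using IH1[of 0] dg[of "Suc n"] by (simp add: coeff_gA_add FA_nth_add)
    next
      case 2 then show ?thesis using IH1[of n] IH2[of "Suc n"] by (simp add: coeff_gA_add FA_nth_add)
    next
      case 3
      then have "Suc n - k = Suc (n - k)" "n - k = n - k" by auto
      then show ?thesis using 3 IH1[of k] IH1[of "k - 1"]
        by (simp add: coeff_gA_add FA_nth_add Suc_diff_le)
    qed
  qed
  have A2: "FA (add_mset a A) $ k = 0" if "k > Suc n" for k
    using that IH2[of k] IH2[of "k - 1"] by (simp add: FA_nth_add)
  show ?case using A1 A2 by (simp add: n_def)
qed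

function Fseq :: "(nat \<Rightarrow> complex) \<Rightarrow> nat \<Rightarrow> complex" where
  "Fseq s n = (if n = 0 then 1 else - (\<Sum>i<n. Fseq s i * s (n - i)) / of_nat n)"
  by auto
termination by (relation "measure snd") auto

declare Fseq.simps[simp del]

lemma Fseq_0: "Fseq s 0 = 1" by (simp add: Fseq.simps)

lemma Nrel_Fseq: "Nrel s (Fseq s) n"
  unfolding Nrel_def by (subst Fseq.simps) auto

lemma T_ex1: fixes s :: "nat \<Rightarrow> complex" shows "\<exists>!T. size T = d \<and> (\<forall>i\<in>{1..d}. (\<Sum>t\<in>#T. t ^ i) = s i)"
proof -
  have PS: "PSf A $ k = (\<Sum>t\<in>#A. t ^ k)" if "k \<ge> 1" for A k
    using that by (simp add: PSf_def)
  define g where "g = Poly (map (\<lambda>j. Fseq s (d - j)) [0..<Suc d])"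
  have cg: "coeff g j = (if j \<le> d then Fseq s (d - j) else 0)" for j
    by (auto simp: g_def nth_default_def nth_map nth_upt simp del: upt_Suc)
  have dg: "degree g = d"
  proof (rule antisym)
    show "degree g \<le> d" by (rule degree_le) (simp add: cg)
    show "d \<le> degree g" by (rule le_degree) (simp add: cg Fseq_0)
  qed
  have lg: "lead_coeff g = 1" using dg cg Fseq_0 by simp
  define A where "A = proots g"
  have gA: "gA A = g"
    using complex_poly_decompose_multiset[of g] lg by (simp add: A_def gA_def)
  have sA: "size A = d" using dg by (simp add: A_def size_proots_complex)
  have FAk: "FA A $ k = Fseq s k" if "k \<le> d" for k
    using gA_FA[of A] that sA gA cg by auto
  have ex: "size A = d \<and> (\<forall>i\<in>{1..d}. (\<Sum>t\<in>#A. t ^ i) = s i)"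
  proof -
    have "PSf A $ n = s n" if "1 \<le> n" "n \<le> d" for n
    proof (rule Nrel_uniqS[of "Fseq s" d, OF Fseq_0 _ that])
      fix n assume n: "1 \<le> n" "n \<le> d"
      have "Nrel (\<lambda>k. PSf A $ k) (Fseq s) n"
        using Nrel_FA[of A n] by (subst Nrel_cong[of n _ "\<lambda>k. PSf A $ k" _ "\<lambda>k. FA A $ k"]) (use n FAk in auto)
      then show "Nrel (\<lambda>k. PSf A $ k) (Fseq s) n \<and> Nrel s (Fseq s) n" using Nrel_Fseq by auto
    qed
    then show ?thesis using sA PS by auto
  qed
  have uniq: "T1 = T2" if T1: "size T1 = d \<and> (\<forall>i\<in>{1..d}. (\<Sum>t\<in>#T1. t ^ i) = s i)"
    and T2: "size T2 = d \<and> (\<forall>i\<in>{1..d}. (\<Sum>t\<in>#T2. t ^ i) = s i)" for T1 T2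
  proof -
    have NT: "Nrel s (\<lambda>k. FA T $ k) n" if T: "size T = d \<and> (\<forall>i\<in>{1..d}. (\<Sum>t\<in>#T. t ^ i) = s i)"
      and n: "1 \<le> n" "n \<le> d" for T n
      using Nrel_FA[of T n] by (subst (asm) Nrel_cong[of n _ s _ "\<lambda>k. FA T $ k"]) (use n T PS in auto)
    have eqF: "FA T1 $ k = FA T2 $ k" if "k \<le> d" for k
      by (rule Nrel_uniqF[of "\<lambda>k. FA T1 $ k" "\<lambda>k. FA T2 $ k" d s, OF _ _ that])
         (simp add: FA_0, use NT T1 T2 in auto)
    have "coeff (gA T1) j = coeff (gA T2) j" for j
    proof (cases "j \<le> d")
      case True
      have "coeff (gA T1) (d - (d - j)) = FA T1 $ (d - j)" "coeff (gA T2) (d - (d - j)) = FA T2 $ (d - j)"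
        using gA_FA[of T1] gA_FA[of T2] T1 T2 by auto
      then show ?thesis using True eqF[of "d - j"] by simp
    next
      case False
      then show ?thesis using degree_gA[of T1] degree_gA[of T2] T1 T2 by (simp add: coeff_eq_0)
    qed
    then have "gA T1 = gA T2" by (rule poly_eqI)
    then show ?thesis by (metis proots_gA)
  qed
  show ?thesis using ex uniq by blast
qed

definition Kc :: "nat \<Rightarrow> nat \<Rightarrow> nat \<Rightarrow> real" where
  "Kc m d i = fact i * fact (m - i) * fact (d - i) / (fact m * fact d)"

lemma part1:
  assumes "1 \<le> d"
  shows "T_transform m d p = replicate_mset d (complex_of_real \<sigma>2) \<longleftrightarrow>
    (\<forall>i\<in>{1..d}. Kc m d i * pcoef d p i = \<sigma>2 ^ i)"
proof -
  define Pr where "Pr T \<longleftrightarrow> size T = d \<and>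
     (\<forall>i\<in>{1..d}. (1 / of_nat d) * sum_mset (image_mset (\<lambda>t. t ^ i) T) =
        complex_of_real (fact i * fact (m - i) * fact (d - i) / (fact m * fact d) * pcoef d p i))" for T
  have dz: "(of_nat d :: complex) \<noteq> 0" using assms by simp
  have eqv: "(1 / of_nat d) * x = y \<longleftrightarrow> x = of_nat d * y" for x y :: complex
    using dz by (auto simp: field_simps)
  have Pr2: "Pr T \<longleftrightarrow> size T = d \<and> (\<forall>i\<in>{1..d}. (\<Sum>t\<in>#T. t ^ i) =
      of_nat d * complex_of_real (Kc m d i * pcoef d p i))" for T
    unfolding Pr_def eqv Kc_def by simp
  have ex1: "\<exists>!T. Pr T" unfolding Pr2 by (rule T_ex1)
  have TT: "T_transform m d p = (THE T. Pr T)" unfolding T_transform_def Pr_def ..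
  have "T_transform m d p = replicate_mset d (complex_of_real \<sigma>2) \<longleftrightarrow> Pr (replicate_mset d (complex_of_real \<sigma>2))"
    using ex1 unfolding TT by (metis theI' the_equality)
  also have "\<dots> \<longleftrightarrow> (\<forall>i\<in>{1..d}. Kc m d i * pcoef d p i = \<sigma>2 ^ i)"
  proof -
    have h: "(complex_of_real \<sigma>2 ^ i = complex_of_real (Kc m d i) * complex_of_real (pcoef d p i))
       \<longleftrightarrow> Kc m d i * pcoef d p i = \<sigma>2 ^ i" for i
      by (metis of_real_mult of_real_power of_real_eq_iff)
    show ?thesis unfolding Pr2 using dz by (simp add: h)
  qed
  finally show ?thesis .
qed

lemma Poly_map_eq:
  assumes "1 \<le> d"
  shows "Poly (map f [0..<Suc d]) = [:0, c:] \<longleftrightarrow> (\<forall>k\<le>d. f k = (if k = 1 then c else (0::real)))"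
proof -
  have cl: "coeff (Poly (map f [0..<Suc d])) k = (if k \<le> d then f k else 0)" for k
    by (auto simp: nth_default_def nth_map nth_upt simp del: upt_Suc)
  have cr: "coeff [:0, c:] k = (if k = 1 then c else 0)" for k
    by (cases k) (auto simp: coeff_pCons split: nat.split)
  show ?thesis unfolding poly_eq_iff cl cr using assms by auto
qed

lemma tri_lemma:
  fixes f g E :: "real fps"
  assumes "E $ 0 \<noteq> 0"
  shows "(\<forall>k\<le>d. f $ k = g $ k) \<longleftrightarrow> (\<forall>n\<le>d. (f * E) $ n = (g * E) $ n)"
proof
  assume H: "\<forall>k\<le>d. f $ k = g $ k"
  show "\<forall>n\<le>d. (f * E) $ n = (g * E) $ n"
    using H by (auto simp: fps_mult_nth intro!: sum.cong)
next
  assume H: "\<forall>n\<le>d. (f * E) $ n = (g * E) $ n"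
  have "k \<le> d \<Longrightarrow> f $ k = g $ k" for k
  proof (induction k rule: less_induct)
    case (less k)
    have sp: "(h * E) $ k = h $ k * E $ 0 + (\<Sum>i<k. h $ i * E $ (k - i))" for h
      unfolding fps_mult_nth atLeast0AtMost lessThan_Suc_atMost[symmetric] sum.lessThan_Suc by simp
    have "(\<Sum>i<k. f $ i * E $ (k - i)) = (\<Sum>i<k. g $ i * E $ (k - i))"
      by (rule sum.cong) (use less in auto)
    then have "f $ k * E $ 0 = g $ k * E $ 0" using H less.prems sp[of f] sp[of g] by auto
    then show ?case using assms by simp
  qed
  then show "\<forall>k\<le>d. f $ k = g $ k" by auto
qed

lemma aux: "real d \<noteq> 0 \<Longrightarrow> - (1 / real d) * (of_nat (Suc k) * ((- (real d * c)) ^ Suc k / fact (Suc k))) = c * ((- (real d * c)) ^ k / (fact k :: real))"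
proof -
  assume d: "real d \<noteq> 0"
  define x where "x = (- (real d * c)) ^ k"
  define y :: real where "y = fact k"
  define r :: real where "r = of_nat (Suc k)"
  have y: "y \<noteq> 0" and r: "r \<noteq> 0" by (simp_all add: y_def r_def)
  have f: "fact (Suc k) = r * y" by (simp add: r_def y_def fact_Suc)
  have p: "(- (real d * c)) ^ Suc k = - (real d * c) * x" by (simp add: x_def)
  have "- (1 / real d) * (r * (- (real d * c) * x / (r * y))) = c * (x / y)"
    using d y r by (simp add: field_simps)
  then show ?thesis unfolding f p by (simp add: r_def x_def y_def)
qed

lemma part2:
  assumes d1: "1 \<le> d" and dm: "d \<le> m" and lc: "coeff p d = 1"
  shows "R_transform m d p = [:0, real m * \<sigma>2:] \<longleftrightarrow>
    (\<forall>i\<in>{1..d}. Kc m d i * pcoef d p i = \<sigma>2 ^ i)"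
proof -
  define E where "E = E_fps m d p"
  define c where "c = real m * \<sigma>2"
  define F where "F = - (fps_const (1 / real d) * fps_X * fps_deriv E * inverse E)"
  have en: "E $ n = (if n \<le> d then
      (-1) ^ n * (real m * real d) ^ n * (fact (m - n) * fact (d - n) / (fact m * fact d)) * pcoef d p n
    else 0)" for n
    by (simp add: E_def E_fps_def)
  have q0: "pcoef d p 0 = 1" using lc by (simp add: pcoef_def)
  have e0: "E $ 0 = 1" using en[of 0] q0 by simp
  have R: "R_transform m d p = Poly (map (fps_nth F) [0..<Suc d])"
    by (simp add: R_transform_def Let_def F_def E_def)
  have "R_transform m d p = [:0, c:] \<longleftrightarrow> (\<forall>k\<le>d. F $ k = (fps_const c * fps_X) $ k)"
  proof -
    have Gk: "(fps_const c * fps_X) $ k = (if k = 1 then c else 0)" for k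
      by (cases k) auto
    show ?thesis unfolding R Poly_map_eq[OF d1] Gk ..
  qed
  also have "\<dots> \<longleftrightarrow> (\<forall>n\<le>d. (F * E) $ n = (fps_const c * fps_X * E) $ n)"
    by (rule tri_lemma) (simp add: e0)
  also have "\<dots> \<longleftrightarrow> (\<forall>n\<le>d. - (1 / real d) * (of_nat n * E $ n) = c * (if n = 0 then 0 else E $ (n - 1)))"
  proof -
    have "F * E = - (fps_const (1 / real d) * (fps_X * fps_deriv E) * (inverse E * E))"
      by (simp add: F_def algebra_simps)
    also have "\<dots> = - (fps_const (1 / real d) * (fps_X * fps_deriv E))"
      using e0 by (simp add: inverse_mult_eq_1)
    finally have FE: "F * E = - (fps_const (1 / real d) * (fps_X * fps_deriv E))" .
    have 1: "(F * E) $ n = - (1 / real d) * (of_nat n * E $ n)" for n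
      unfolding FE by (cases n) simp_all
    have 2: "(fps_const c * fps_X * E) $ n = c * (if n = 0 then 0 else E $ (n - 1))" for n
      by (simp add: mult.assoc)
    show ?thesis unfolding 1 2 ..
  qed
  also have "\<dots> \<longleftrightarrow> (\<forall>n\<le>d. E $ n = (- (real d * c)) ^ n / fact n)"
  proof
    assume H: "\<forall>n\<le>d. - (1 / real d) * (of_nat n * E $ n) = c * (if n = 0 then 0 else E $ (n - 1))"
    have "n \<le> d \<Longrightarrow> E $ n = (- (real d * c)) ^ n / fact n" for n
    proof (induction n)
      case 0 then show ?case using e0 by simp
    next
      case (Suc n)
      have "- (1 / real d) * (of_nat (Suc n) * E $ Suc n) = c * E $ n" using H Suc.prems by force
      then have "E $ Suc n = - (real d * c) * E $ n / of_nat (Suc n)"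
        using d1 by (simp add: field_simps)
      then show ?case using Suc by (simp add: field_simps)
    qed
    then show "\<forall>n\<le>d. E $ n = (- (real d * c)) ^ n / fact n" by auto
  next
    assume H: "\<forall>n\<le>d. E $ n = (- (real d * c)) ^ n / fact n"
    show "\<forall>n\<le>d. - (1 / real d) * (of_nat n * E $ n) = c * (if n = 0 then 0 else E $ (n - 1))"
    proof (intro allI impI)
      fix n assume n: "n \<le> d"
      show "- (1 / real d) * (of_nat n * E $ n) = c * (if n = 0 then 0 else E $ (n - 1))"
      proof (cases n)
        case 0 then show ?thesis by simp
      next
        case (Suc k)
        then have "E $ n = (- (real d * c)) ^ Suc k / fact (Suc k)" "E $ (n - 1) = (- (real d * c)) ^ k / fact k"
          using H n by auto
        then show ?thesis using Suc d1 aux[of d k c] by simp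
      qed
    qed
  qed
  also have "\<dots> \<longleftrightarrow> (\<forall>n\<le>d. Kc m d n * pcoef d p n = \<sigma>2 ^ n)"
  proof -
    have "E $ n = (- (real d * c)) ^ n / fact n \<longleftrightarrow> Kc m d n * pcoef d p n = \<sigma>2 ^ n" if n: "n \<le> d" for n
    proof -
      define a where "a = (-1) ^ n * (real m * real d) ^ n / fact n"
      have az: "a \<noteq> 0" using d1 dm by (simp add: a_def)
      have 1: "E $ n = a * (Kc m d n * pcoef d p n)"
        using n by (simp add: en a_def Kc_def field_simps)
      have 2: "(- (real d * c)) ^ n / fact n = a * \<sigma>2 ^ n"
      proof -
        have "- (real d * c) = (-1) * (real m * real d) * \<sigma>2" by (simp add: c_def)
        then have "(- (real d * c)) ^ n = (-1) ^ n * (real m * real d) ^ n * \<sigma>2 ^ n"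
          by (simp only: power_mult_distrib)
        then show ?thesis by (simp add: a_def)
      qed
      show ?thesis unfolding 1 2 using az by simp
    qed
    then show ?thesis by auto
  qed
  also have "\<dots> \<longleftrightarrow> (\<forall>i\<in>{1..d}. Kc m d i * pcoef d p i = \<sigma>2 ^ i)"
  proof -
    have b: "Kc m d 0 * pcoef d p 0 = \<sigma>2 ^ 0" using q0 by (simp add: Kc_def)
    show ?thesis
    proof
      assume "\<forall>n\<le>d. Kc m d n * pcoef d p n = \<sigma>2 ^ n"
      then show "\<forall>i\<in>{1..d}. Kc m d i * pcoef d p i = \<sigma>2 ^ i" by auto
    next
      assume H: "\<forall>i\<in>{1..d}. Kc m d i * pcoef d p i = \<sigma>2 ^ i"
      show "\<forall>n\<le>d. Kc m d n * pcoef d p n = \<sigma>2 ^ n"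
      proof (intro allI impI)
        fix n assume "n \<le> d"
        then show "Kc m d n * pcoef d p n = \<sigma>2 ^ n" using b H by (cases "n = 0") auto
      qed
    qed
  qed
  finally show ?thesis by (simp add: c_def)
qed

lemma order_eq_smult:
  fixes P Q :: "complex poly"
  assumes "P \<noteq> 0" "Q \<noteq> 0"
  shows "(\<forall>z. order z P = order z Q) \<longleftrightarrow> smult (lead_coeff Q) P = smult (lead_coeff P) Q"
proof
  assume H: "\<forall>z. order z P = order z Q"
  have "proots P = proots Q" by (rule multiset_eqI) (simp add: assms H)
  then show "smult (lead_coeff Q) P = smult (lead_coeff P) Q"
    using complex_poly_decompose_multiset[of P] complex_poly_decompose_multiset[of Q]
    by (metis mult.commute smult_smult)
next
  assume H: "smult (lead_coeff Q) P = smult (lead_coeff P) Q"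
  show "\<forall>z. order z P = order z Q"
  proof
    fix z
    have "order z (smult (lead_coeff Q) P) = order z (smult (lead_coeff P) Q)" using H by simp
    then show "order z P = order z Q" using assms by (simp add: order_smult)
  qed
qed

lemma coeff_laguerre:
  "coeff (laguerre d a) j = (if j \<le> d then real ((d + a) choose (d - j)) * (-1) ^ j / fact j else 0)"
proof -
  have h: "coeff (smult x (monom 1 i)) j = (if i = j then x else 0)" for x :: real and i
    by (simp add: coeff_monom)
  show ?thesis unfolding laguerre_def coeff_sum h by (simp add: sum.delta)
qed

lemma ratio_aux:
  fixes s :: real
  assumes "s > 0" "i \<le> d"
  shows "(1 / s) ^ (d - i) * (C * (-1) ^ (d - i) / fact (d - i)) =
     ((1 / s) ^ d * ((-1) ^ d / fact d)) * ((-1) ^ i * s ^ i * C * fact d / fact (d - i))"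
proof -
  define a where "a = (1 / s) ^ (d - i)"
  define u :: real where "u = (-1) ^ (d - i)"
  have d: "d = (d - i) + i" using assms by simp
  have 1: "(1 / s) ^ d = a * (1 / s) ^ i" unfolding a_def by (subst d) (simp only: power_add)
  have 2: "((-1::real) ^ d) = u * (-1) ^ i" unfolding u_def by (subst d) (simp only: power_add)
  have 3: "(1 / s) ^ i * s ^ i = 1" using assms by (simp add: power_divide)
  have 4: "((-1::real) ^ i) * (-1) ^ i = 1" by (simp flip: power_add)
  have f: "fact d \<noteq> (0::real)" "fact (d - i) \<noteq> (0::real)" by simp_all
  show ?thesis unfolding 1 2 a_def[symmetric] u_def[symmetric]
    using 3 4 f assms(1) by (simp add: field_simps)
qed

lemma KX_aux:
  fixes a b c e f s :: real
  assumes "a \<noteq> 0" "b \<noteq> 0" "c \<noteq> 0" "e \<noteq> 0" "f \<noteq> 0"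
  shows "a * b * c / (e * f) * (s * (e / (a * b)) * f / c) = s"
  using assms by (simp add: field_simps)

lemma part3:
  assumes d1: "1 \<le> d" and dm: "d \<le> m" and dp: "degree p = d" and lc: "lead_coeff p = 1"
    and sp: "\<sigma>2 > 0"
  shows "(\<forall>z::complex. order z (map_poly complex_of_real p) =
                 order z (map_poly complex_of_real (pcompose (laguerre d (m - d)) [:0, 1 / \<sigma>2:])))
     \<longleftrightarrow> (\<forall>i\<in>{1..d}. Kc m d i * pcoef d p i = \<sigma>2 ^ i)"
proof -
  define Lp where "Lp = pcompose (laguerre d (m - d)) [:0, 1 / \<sigma>2:]"
  define c0 where "c0 = (1 / \<sigma>2) ^ d * ((-1) ^ d / fact d)"
  have dd: "d + (m - d) = m" using dm by simp
  have cL: "coeff Lp j = (if j \<le> d then (1 / \<sigma>2) ^ j * (real (m choose (d - j)) * (-1) ^ j / fact j) else 0)" for j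
    by (simp add: Lp_def coeff_pcompose_linear coeff_laguerre dd)
  have c0d: "coeff Lp d = c0" by (simp add: cL c0_def)
  have c0z: "c0 \<noteq> 0" using sp by (simp add: c0_def)
  have dL: "degree Lp = d"
  proof (rule antisym)
    show "degree Lp \<le> d" by (rule degree_le) (simp add: cL)
    show "d \<le> degree Lp" by (rule le_degree) (simp add: c0d c0z)
  qed
  have lcL: "lead_coeff Lp = c0" using dL c0d by simp
  define pC where "pC = map_poly complex_of_real p"
  define LC where "LC = map_poly complex_of_real Lp"
  have cpC: "coeff pC j = complex_of_real (coeff p j)" for j by (simp add: pC_def coeff_map_poly)
  have cLC: "coeff LC j = complex_of_real (coeff Lp j)" for j by (simp add: LC_def coeff_map_poly)
  have lpC: "lead_coeff pC = 1" unfolding pC_def using lc by (subst lead_coeff_map_poly_nz) simp_all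
  have lLC: "lead_coeff LC = complex_of_real c0" unfolding LC_def using lcL c0z by (subst lead_coeff_map_poly_nz) simp_all
  have pCz: "pC \<noteq> 0" using lpC by auto
  have LCz: "LC \<noteq> 0" using lLC c0z by auto
  have "(\<forall>z. order z pC = order z LC) \<longleftrightarrow> smult (lead_coeff LC) pC = smult (lead_coeff pC) LC"
    by (rule order_eq_smult[OF pCz LCz])
  also have "\<dots> \<longleftrightarrow> (\<forall>j. c0 * coeff p j = coeff Lp j)"
  proof -
    have "smult (lead_coeff LC) pC = smult (lead_coeff pC) LC \<longleftrightarrow> smult (complex_of_real c0) pC = smult 1 LC"
      by (simp only: lpC lLC)
    also have "\<dots> \<longleftrightarrow> (\<forall>j. c0 * coeff p j = coeff Lp j)"
      unfolding poly_eq_iff coeff_smult cpC cLC by (simp flip: of_real_mult)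
    finally show ?thesis .
  qed
  also have "\<dots> \<longleftrightarrow> (\<forall>i\<le>d. coeff p (d - i) = (-1) ^ i * \<sigma>2 ^ i * real (m choose i) * fact d / fact (d - i))"
  proof -
    have r: "coeff Lp (d - i) = c0 * ((-1) ^ i * \<sigma>2 ^ i * real (m choose i) * fact d / fact (d - i))"
      if "i \<le> d" for i
      using ratio_aux[OF sp that, of "real (m choose i)"] that by (simp add: cL c0_def)
    show ?thesis
    proof
      assume H: "\<forall>j. c0 * coeff p j = coeff Lp j"
      show "\<forall>i\<le>d. coeff p (d - i) = (-1) ^ i * \<sigma>2 ^ i * real (m choose i) * fact d / fact (d - i)"
      proof (intro allI impI)
        fix i assume i: "i \<le> d"
        have "c0 * coeff p (d - i) = c0 * ((-1) ^ i * \<sigma>2 ^ i * real (m choose i) * fact d / fact (d - i))"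
          using H r[OF i] by simp
        then show "coeff p (d - i) = (-1) ^ i * \<sigma>2 ^ i * real (m choose i) * fact d / fact (d - i)"
          by (rule mult_left_cancel[OF c0z, THEN iffD1])
      qed
    next
      assume H: "\<forall>i\<le>d. coeff p (d - i) = (-1) ^ i * \<sigma>2 ^ i * real (m choose i) * fact d / fact (d - i)"
      show "\<forall>j. c0 * coeff p j = coeff Lp j"
      proof
        fix j
        show "c0 * coeff p j = coeff Lp j"
        proof (cases "j \<le> d")
          case True
          have "coeff p (d - (d - j)) = (-1) ^ (d - j) * \<sigma>2 ^ (d - j) * real (m choose (d - j)) * fact d / fact (d - (d - j))"
            using H by simp
          then show ?thesis using r[of "d - j"] True by simp
        next
          case False
          then show ?thesis using dp by (simp add: cL coeff_eq_0)
        qed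
      qed
    qed
  qed
  also have "\<dots> \<longleftrightarrow> (\<forall>i\<in>{1..d}. Kc m d i * pcoef d p i = \<sigma>2 ^ i)"
  proof -
    have e: "coeff p (d - i) = (-1) ^ i * \<sigma>2 ^ i * real (m choose i) * fact d / fact (d - i)
        \<longleftrightarrow> Kc m d i * pcoef d p i = \<sigma>2 ^ i" if "i \<le> d" for i
    proof -
      have im: "i \<le> m" using that dm by simp
      have cm: "real (m choose i) = fact m / (fact i * fact (m - i))" using binomial_fact[OF im] by simp
      define X where "X = \<sigma>2 ^ i * real (m choose i) * fact d / fact (d - i)"
      have KX: "Kc m d i * X = \<sigma>2 ^ i" unfolding X_def Kc_def cm by (rule KX_aux) simp_all
      have Kz: "Kc m d i \<noteq> 0" by (simp add: Kc_def)
      have pc: "coeff p (d - i) = (-1) ^ i * pcoef d p i"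
        by (simp add: pcoef_def flip: power_add mult.assoc)
      have "coeff p (d - i) = (-1) ^ i * X \<longleftrightarrow> pcoef d p i = X" unfolding pc by simp
      also have "\<dots> \<longleftrightarrow> Kc m d i * pcoef d p i = \<sigma>2 ^ i" using Kz by (simp flip: KX)
      finally show ?thesis by (simp add: X_def mult.assoc)
    qed
    have b: "Kc m d 0 * pcoef d p 0 = \<sigma>2 ^ 0" using lc dp by (simp add: Kc_def pcoef_def)
    show ?thesis
    proof
      assume "\<forall>i\<le>d. coeff p (d - i) = (-1) ^ i * \<sigma>2 ^ i * real (m choose i) * fact d / fact (d - i)"
      then show "\<forall>i\<in>{1..d}. Kc m d i * pcoef d p i = \<sigma>2 ^ i" using e by auto
    next
      assume H: "\<forall>i\<in>{1..d}. Kc m d i * pcoef d p i = \<sigma>2 ^ i"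
      show "\<forall>i\<le>d. coeff p (d - i) = (-1) ^ i * \<sigma>2 ^ i * real (m choose i) * fact d / fact (d - i)"
      proof (intro allI impI)
        fix i assume i: "i \<le> d"
        then have "Kc m d i * pcoef d p i = \<sigma>2 ^ i" using b H by (cases "i = 0") auto
        then show "coeff p (d - i) = (-1) ^ i * \<sigma>2 ^ i * real (m choose i) * fact d / fact (d - i)"
          using e[OF i] by simp
      qed
    qed
  qed
  finally show ?thesis unfolding pC_def LC_def Lp_def .
qed


theorem mainTheorem9:
  fixes m d :: nat and p :: "real poly" and \<sigma>2 :: real
  assumes "1 \<le> d" and "d \<le> m"
    and "degree p = d" and "lead_coeff p = 1"
    and "\<forall>z::complex. poly (map_poly complex_of_real p) z = 0 \<longrightarrow> z \<in> \<real> \<and> 0 \<le> Re z"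
    and "\<sigma>2 > 0"
  shows "(T_transform m d p = replicate_mset d (complex_of_real \<sigma>2)
          \<longleftrightarrow> R_transform m d p = [:0, real m * \<sigma>2:])
       \<and> (R_transform m d p = [:0, real m * \<sigma>2:]
          \<longleftrightarrow> (\<forall>z::complex. order z (map_poly complex_of_real p) =
                 order z (map_poly complex_of_real (pcompose (laguerre d (m - d)) [:0, 1 / \<sigma>2:]))))"
proof -
  have lc: "coeff p d = 1" using assms(3,4) by simp
  have A: "T_transform m d p = replicate_mset d (complex_of_real \<sigma>2) \<longleftrightarrow>
    (\<forall>i\<in>{1..d}. Kc m d i * pcoef d p i = \<sigma>2 ^ i)" by (rule part1[OF assms(1)])
  have B: "R_transform m d p = [:0, real m * \<sigma>2:] \<longleftrightarrow>
    (\<forall>i\<in>{1..d}. Kc m d i * pcoef d p i = \<sigma>2 ^ i)" by (rule part2[OF assms(1,2) lc])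
  have C: "(\<forall>z::complex. order z (map_poly complex_of_real p) =
                 order z (map_poly complex_of_real (pcompose (laguerre d (m - d)) [:0, 1 / \<sigma>2:])))
     \<longleftrightarrow> (\<forall>i\<in>{1..d}. Kc m d i * pcoef d p i = \<sigma>2 ^ i)" by (rule part3[OF assms(1,2,3,4,6)])
  show ?thesis using A B C by blast
qed

end
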